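(* Let $\Omega\subset\mathbb{R}^n$ be a bounded, strictly convex domain, $\Lambda\ge1$, $K<\infty$, and let $v\in C(\overline\Omega)$ satisfy $M_\Lambda^-(D^2v)\le K$ in $\Omega$ in the viscosity sense. Suppose a paraboloid $P$ of opening $-a<0$ is tangent from below to $\Gamma^0_v$ in $\Omega$ at a point $x_0\in\Omega\setminus A_0(v)$, and suppose that for some $t>0$ the paraboloid $P+t$ is tangent from below to $v$ in $\Omega$ at a point $x_1\in\overline\Omega$ (i.e. $P+t\le v$ on $\overline\Omega$ and $P(x_1)+t=v(x_1)$). Then $x_1\in\overline\Omega\setminus A_0(v)$.
   Context: For a symmetric $n\times n$ matrix $N$, $M_\Lambda^-(N) := (\text{sum of positive eigenvalues of }N) + \Lambda\,(\text{sum of negative eigenvalues of }N)$. For $u,\varphi\in C(\overline\Omega)$, $\varphi$ is tangent from below to $u$ in $\Omega$ at $x_0$ if $\varphi\le u$ in $\overline\Omega$ and $\varphi(x_0)=u(x_0)$. $M_\Lambda^-(D^2v)\le K$ in the viscosity sense in $\Omega$ means $M_\Lambda^-(D^2\varphi(x_0))\le K$ whenever $\varphi\in C^2(\overline\Omega)$ is tangent from below to $v$ in $\Omega$ at $x_0\in\Omega$. A paraboloid of opening $a$ is a function $P^a_{y,b}(x)=\frac a2|x|^2+y\cdot x+b$ with $y\in\mathbb{R}^n$, $b\in\mathbb{R}$. For $a\ge 0$, the $a$-convex envelope of $v$ is $\Gamma^a_v(x):=\sup\{P^{-a}_{y,b}(x): y\in\mathbb{R}^n,\ b\in\mathbb{R},\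 P^{-a}_{y,b}\le v\text{ in }\overline\Omega\}$ for $x\in\overline\Omega$ (so $\Gamma^0_v$ is the convex envelope), and $A_a(v):=\{x\in\Omega: v(x)=\Gamma^a_v(x)\}$. *)

theory Defs
  imports "HOL-Analysis.Analysis" "HOL-Computational_Algebra.Polynomial"
begin

definition charpoly :: "real^'n^'n \<Rightarrow> real poly" where
  "charpoly N = det (\<chi> i j. (if i = j then [:0, 1:] else 0) - [: N$i$j :])"

text \<open>M_Lambda^-(N): sum of positive eigenvalues plus Lambda times the sum of the
  negative eigenvalues, eigenvalues counted with (algebraic) multiplicity.
  For symmetric N all roots of the characteristic polynomial are real.\<close>
definition pucci_minus :: "real \<Rightarrow> real^'n^'n \<Rightarrow> real" where
  "pucci_minus \<Lambda> N =
     (\<Sum>k\<in>{k. poly (charpoly N) k = 0}.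
        real (order k (charpoly N)) * (if k > 0 then k else \<Lambda> * k))"

text \<open>phi in C^2(closure Omega), with gradient g and Hessian H on Omega:
  derivatives up to order 2 exist in Omega and extend continuously to the closure
  (for bounded Omega: uniform continuity on Omega).\<close>
definition C2_closure_with ::
  "(real^'n) set \<Rightarrow> (real^'n \<Rightarrow> real) \<Rightarrow> (real^'n \<Rightarrow> real^'n) \<Rightarrow> (real^'n \<Rightarrow> real^'n^'n) \<Rightarrow> bool" where
  "C2_closure_with \<Omega> \<phi> g H \<longleftrightarrow>
     continuous_on (closure \<Omega>) \<phi> \<and>
     (\<forall>x\<in>\<Omega>. (\<phi> has_derivative (\<lambda>h. g x \<bullet> h)) (at x)) \<and>
     (\<forall>x\<in>\<Omega>. (g has_derivative (\<lambda>h. H x *v h)) (at x)) \<and>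
     uniformly_continuous_on \<Omega> g \<and> uniformly_continuous_on \<Omega> H"

definition tangent_below :: "(real^'n) set \<Rightarrow> (real^'n \<Rightarrow> real) \<Rightarrow> (real^'n \<Rightarrow> real) \<Rightarrow> real^'n \<Rightarrow> bool" where
  "tangent_below \<Omega> \<phi> u x0 \<longleftrightarrow> (\<forall>x\<in>closure \<Omega>. \<phi> x \<le> u x) \<and> \<phi> x0 = u x0"

definition visc_pucci_le :: "real \<Rightarrow> real \<Rightarrow> (real^'n) set \<Rightarrow> (real^'n \<Rightarrow> real) \<Rightarrow> bool" where
  "visc_pucci_le \<Lambda> K \<Omega> v \<longleftrightarrow>
     (\<forall>\<phi> g H x0. C2_closure_with \<Omega> \<phi> g H \<and> x0 \<in> \<Omega> \<and> tangent_below \<Omega> \<phi> v x0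
        \<longrightarrow> pucci_minus \<Lambda> (H x0) \<le> K)"

definition paraboloid :: "real \<Rightarrow> real^'n \<Rightarrow> real \<Rightarrow> real^'n \<Rightarrow> real" where
  "paraboloid a y b x = a / 2 * (norm x)\<^sup>2 + y \<bullet> x + b"

definition conv_env :: "real \<Rightarrow> (real^'n) set \<Rightarrow> (real^'n \<Rightarrow> real) \<Rightarrow> real^'n \<Rightarrow> real" where
  "conv_env a \<Omega> v x =
     Sup {paraboloid (-a) y b x | y b. \<forall>z\<in>closure \<Omega>. paraboloid (-a) y b z \<le> v z}"

definition contact_set :: "real \<Rightarrow> (real^'n) set \<Rightarrow> (real^'n \<Rightarrow> real) \<Rightarrow> (real^'n) set" where
  "contact_set a \<Omega> v = {x \<in> \<Omega>. v x = conv_env a \<Omega> v x}"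

definition strictly_convex_set :: "(real^'n) set \<Rightarrow> bool" where
  "strictly_convex_set \<Omega> \<longleftrightarrow> convex \<Omega> \<and>
     (\<forall>x\<in>closure \<Omega>. \<forall>y\<in>closure \<Omega>. x \<noteq> y \<longrightarrow> open_segment x y \<subseteq> \<Omega>)"

end

theory Submission imports Defs begin
lemma outer_conj:
  fixes A :: "real^'n^'n" and u :: "real^'n"
  shows "transpose A ** (\<chi> i j. u$i * u$j) ** A = (\<chi> i j. (transpose A *v u)$i * (transpose A *v u)$j)"
proof -
  have "(\<Sum>l\<in>UNIV. (\<Sum>m\<in>UNIV. A$m$i * (u$m * u$l)) * A$l$j) = (\<Sum>m\<in>UNIV. A$m$i * u$m) * (\<Sum>l\<in>UNIV. u$l * A$l$j)" for i j
  proof -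
    have "(\<Sum>l\<in>UNIV. (\<Sum>m\<in>UNIV. A$m$i * (u$m * u$l)) * A$l$j) = (\<Sum>l\<in>UNIV. \<Sum>m\<in>UNIV. A$m$i * (u$m * u$l) * A$l$j)"
      by (simp add: sum_distrib_right)
    also have "\<dots> = (\<Sum>m\<in>UNIV. \<Sum>l\<in>UNIV. (A$m$i * u$m) * (u$l * A$l$j))"
      by (subst sum.swap) (simp add: mult_ac)
    also have "\<dots> = (\<Sum>m\<in>UNIV. A$m$i * u$m) * (\<Sum>l\<in>UNIV. u$l * A$l$j)"
      by (simp add: sum_product)
    finally show ?thesis .
  qed
  then show ?thesis
    by (simp add: vec_eq_iff matrix_matrix_mult_def matrix_vector_mult_def transpose_def mult_ac)
qed

lemma mm_diff_l: "((B::real^'n^'n) - C) ** A = B ** A - C ** A"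
  by (simp add: vec_eq_iff matrix_matrix_mult_def sum_subtractf left_diff_distrib)
lemma mm_diff_r: "(A::real^'n^'n) ** (B - C) = A ** B - A ** C"
  by (simp add: vec_eq_iff matrix_matrix_mult_def sum_subtractf right_diff_distrib)
lemma mm_scale_l: "(c *\<^sub>R (B::real^'n^'n)) ** A = c *\<^sub>R (B ** A)"
  by (simp add: vec_eq_iff matrix_matrix_mult_def sum_distrib_left mult_ac)
lemma mm_scale_r: "(A::real^'n^'n) ** (c *\<^sub>R B) = c *\<^sub>R (A ** B)"
  by (simp add: vec_eq_iff matrix_matrix_mult_def sum_distrib_left mult_ac)

lemma det_rank1_unit:
  fixes u :: "real^'n"
  assumes "norm u = 1"
  shows "det ((\<chi> i j. (if i = j then c else 0) - k * (u$i * u$j)) :: real^'n^'n) = c^(CARD('n)-1) * (c - k)"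
proof -
  fix i0 :: 'n
  obtain A where A: "orthogonal_matrix A" "A *v (axis i0 1) = u"
    using orthogonal_matrix_exists_basis assms by metis
  have TA: "transpose A ** A = mat 1" using A(1) orthogonal_matrix_def by blast
  have Tu: "transpose A *v u = axis i0 1"
    using A(2) TA by (metis matrix_vector_mul_assoc matrix_vector_mul_lid)
  define M where "M = ((\<chi> i j. (if i = j then c else 0) - k * (u$i * u$j)) :: real^'n^'n)"
  have M: "M = c *\<^sub>R mat 1 - k *\<^sub>R (\<chi> i j. u$i * u$j)"
    by (simp add: M_def vec_eq_iff mat_def)
  have "transpose A ** M ** A = c *\<^sub>R (transpose A ** A) - k *\<^sub>R (transpose A ** (\<chi> i j. u$i * u$j) ** A)"
    unfolding M by (simp add: mm_diff_l mm_diff_r mm_scale_l mm_scale_r matrix_mul_assoc)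
  also have "\<dots> = (\<chi> i j. (if i = j then c else 0) - k * ((axis i0 1::real^'n)$i * (axis i0 1::real^'n)$j))"
    unfolding outer_conj Tu TA by (simp add: vec_eq_iff mat_def)
  finally have eq: "transpose A ** M ** A = \<dots>" .
  have dA: "det A * det A = 1" using det_orthogonal_matrix[OF A(1)] by auto
  have "det (transpose A ** M ** A) = det M"
    by (simp add: det_mul) (metis dA mult.commute mult.left_commute mult_1_right)
  then have "det M = det ((\<chi> i j. (if i = j then c else 0) - k * ((axis i0 1::real^'n)$i * (axis i0 1::real^'n)$j)) :: real^'n^'n)"
    using eq by simp
  also have "\<dots> = (\<Prod>i\<in>UNIV. (if i = i0 then c - k else c))"
    by (subst det_diagonal) (auto simp: axis_def intro!: prod.cong)
  also have "\<dots> = (c - k) * (\<Prod>i\<in>UNIV-{i0}. c)"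
    by (subst prod.remove[of UNIV i0]) (auto intro!: prod.cong)
  also have "\<dots> = c^(CARD('n)-1) * (c - k)"
    by (simp add: card_Diff_singleton)
  finally show ?thesis unfolding M_def .
qed

lemma poly_det: "poly (det (M::real poly^'n^'n)) x = det (\<chi> i j. poly (M$i$j) x)"
  unfolding det_def by (simp add: poly_sum poly_prod)

lemma charpoly_rank1:
  fixes e :: "real^'n"
  assumes "e \<noteq> 0"
  shows "charpoly ((\<chi> i j. (if i = j then -a else 0) + k * (e$i * e$j)) :: real^'n^'n)
       = [:a,1:]^(CARD('n)-1) * [:a - k * (e \<bullet> e),1:]"
proof -
  define u where "u = e /\<^sub>R norm e"
  have nu: "norm u = 1" using assms by (simp add: u_def)
  have eu: "e$i * e$j = (e \<bullet> e) * (u$i * u$j)" for i j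
    using assms by (simp add: u_def power2_norm_eq_inner[symmetric] field_simps power2_eq_square)
  have "poly (charpoly ((\<chi> i j. (if i = j then -a else 0) + k * (e$i * e$j)) :: real^'n^'n)) x
     = poly ([:a,1:]^(CARD('n)-1) * [:a - k * (e \<bullet> e),1:]) x" for x
  proof -
    have "poly (charpoly ((\<chi> i j. (if i = j then -a else 0) + k * (e$i * e$j)) :: real^'n^'n)) x
      = det ((\<chi> i j. (if i = j then x + a else 0) - (k * (e \<bullet> e)) * (u$i * u$j)) :: real^'n^'n)"
      unfolding charpoly_def poly_det by (intro arg_cong[where f=det]) (simp add: vec_eq_iff eu)
    also have "\<dots> = (x+a)^(CARD('n)-1) * (x + a - k * (e \<bullet> e))"
      by (rule det_rank1_unit[OF nu])
    finally show ?thesis by (simp add: poly_power algebra_simps)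
  qed
  then show ?thesis using poly_eq_poly_eq_iff by blast
qed

lemma pucci_rank1:
  fixes e :: "real^'n"
  assumes "e \<noteq> 0" "a > 0" "k * (e \<bullet> e) - a > 0"
  shows "pucci_minus \<Lambda> ((\<chi> i j. (if i = j then -a else 0) + k * (e$i * e$j)) :: real^'n^'n)
       = real (CARD('n)-1) * (\<Lambda> * (-a)) + (k * (e \<bullet> e) - a)"
proof -
  define \<beta> where "\<beta> = k * (e \<bullet> e)"
  define P where "P = [:a,1:]^(CARD('n)-1) * [:a - \<beta>,1:]"
  have cp: "charpoly ((\<chi> i j. (if i = j then -a else 0) + k * (e$i * e$j)) :: real^'n^'n) = P"
    unfolding P_def \<beta>_def by (rule charpoly_rank1[OF assms(1)])
  have h1: "[:a,1:]^(CARD('n)-1) \<noteq> (0::real poly)" by (rule power_not_zero) simp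
  have h2: "[:a - \<beta>,1:] \<noteq> (0::real poly)" by simp
  have P0: "P \<noteq> 0" unfolding P_def using h1 h2 by (simp only: mult_eq_0_iff de_Morgan_disj) simp
  have roots: "{x. poly P x = 0} \<subseteq> {-a, \<beta> - a}"
  proof
    fix x assume "x \<in> {x. poly P x = 0}"
    moreover have "poly P x = (x+a)^(CARD('n)-1) * (x + a - \<beta>)"
      by (simp add: P_def algebra_simps)
    ultimately have "(x+a)^(CARD('n)-1) * (x + a - \<beta>) = 0" by simp
    then have "(x+a)^(CARD('n)-1) = 0 \<or> x + a - \<beta> = 0" by (simp only: mult_eq_0_iff)
    then show "x \<in> {-a, \<beta> - a}" by (auto simp: algebra_simps)
  qed
  have ne: "-a \<noteq> \<beta> - a" using assms unfolding \<beta>_def by auto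
  have o1: "order (-a) P = CARD('n)-1"
  proof -
    have "order (-a) P = order (-a) ([:a,1:]^(CARD('n)-1)) + order (-a) [:a - \<beta>,1:]"
      unfolding P_def by (rule order_mult) (use P0 P_def in simp)
    moreover have "order (-a) ([:a,1:]^(CARD('n)-1)) = CARD('n)-1"
      using order_power_n_n[of "-a" "CARD('n)-1"] by simp
    moreover have "order (-a) [:a - \<beta>,1:] = 0"
      by (rule order_0I) (use ne in auto)
    ultimately show ?thesis by simp
  qed
  have o2: "order (\<beta> - a) P = 1"
  proof -
    have "order (\<beta> - a) P = order (\<beta> - a) ([:a,1:]^(CARD('n)-1)) + order (\<beta> - a) [:a - \<beta>,1:]"
      unfolding P_def by (rule order_mult) (use P0 P_def in simp)
    moreover have "order (\<beta> - a) ([:a,1:]^(CARD('n)-1)) = 0"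
      by (rule order_0I) (use ne in \<open>auto simp: poly_power\<close>)
    moreover have "order (\<beta> - a) [:a - \<beta>,1:] = 1"
      using order_power_n_n[of "\<beta> - a" 1] by simp
    ultimately show ?thesis by simp
  qed
  have "pucci_minus \<Lambda> ((\<chi> i j. (if i = j then -a else 0) + k * (e$i * e$j)) :: real^'n^'n)
     = (\<Sum>x\<in>{x. poly P x = 0}. real (order x P) * (if x > 0 then x else \<Lambda> * x))"
    unfolding pucci_minus_def cp ..
  also have "\<dots> = (\<Sum>x\<in>{-a, \<beta> - a}. real (order x P) * (if x > 0 then x else \<Lambda> * x))"
    by (rule sum.mono_neutral_left) (use roots in \<open>auto simp: order_0I\<close>)
  also have "\<dots> = real (CARD('n)-1) * (\<Lambda> * (-a)) + (\<beta> - a)"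
    using ne o1 o2 assms unfolding \<beta>_def by simp
  finally show ?thesis unfolding \<beta>_def .
qed
lemma Hmv: "(((\<chi> i j. if i = j then -a else 0) + r *\<^sub>R (\<chi> i j. e$i * e$j)) :: real^'n^'n) *v h
   = (-a) *\<^sub>R h + (r * (e \<bullet> h)) *\<^sub>R e"
proof -
  have 1: "((\<chi> i j. if i = j then -a else 0) :: real^'n^'n) *v h = (-a) *\<^sub>R h"
  proof -
    have "((\<chi> i j. if i = j then -a else 0) :: real^'n^'n) = (-a) *\<^sub>R mat 1"
      by (simp add: vec_eq_iff mat_def)
    then show ?thesis by (simp only: scaleR_matrix_vector_assoc[symmetric] matrix_vector_mul_lid)
  qed
  have 2: "((\<chi> i j. e$i * e$j) :: real^'n^'n) *v h = (e \<bullet> h) *\<^sub>R e"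
    by (simp add: vec_eq_iff matrix_vector_mult_def inner_vec_def sum_distrib_left mult_ac)
  show ?thesis
    by (simp add: matrix_vector_mult_add_rdistrib scaleR_matrix_vector_assoc[symmetric] 1 2)
qed

lemma test_fn:
  fixes \<Omega> :: "(real^'n) set" and e m x1 :: "real^'n"
  assumes "bounded \<Omega>"
  shows "C2_closure_with \<Omega>
     (\<lambda>z. c + m \<bullet> (z - x1) - a/2 * ((z - x1) \<bullet> (z - x1)) + \<alpha> * (e \<bullet> (z - x1))^2 - \<alpha>^3 * (e \<bullet> (z - x1))^4)
     (\<lambda>z. m - a *\<^sub>R (z - x1) + (2*\<alpha>*(e \<bullet> (z - x1)) - 4*\<alpha>^3*(e \<bullet> (z - x1))^3) *\<^sub>R e)
     (\<lambda>z. (\<chi> i j. if i = j then -a else 0) + (2*\<alpha> - 12*\<alpha>^3*(e \<bullet> (z - x1))^2) *\<^sub>R (\<chi> i j. e$i * e$j))"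
proof -
  have cc: "compact (closure \<Omega>)" using assms by (simp add: compact_closure)
  have uc: "uniformly_continuous_on \<Omega> f" if "continuous_on (closure \<Omega>) f" for f :: "real^'n \<Rightarrow> 'b::metric_space"
    using compact_uniformly_continuous[OF that cc] closure_subset
    unfolding uniformly_continuous_on_def by (meson subsetD)
  show ?thesis
    unfolding C2_closure_with_def
  proof (intro conjI ballI)
    show "continuous_on (closure \<Omega>) (\<lambda>z. c + m \<bullet> (z - x1) - a/2 * ((z - x1) \<bullet> (z - x1)) + \<alpha> * (e \<bullet> (z - x1))^2 - \<alpha>^3 * (e \<bullet> (z - x1))^4)"
      by (intro continuous_intros)
    show "uniformly_continuous_on \<Omega> (\<lambda>z. m - a *\<^sub>R (z - x1) + (2*\<alpha>*(e \<bullet> (z - x1)) - 4*\<alpha>^3*(e \<bullet> (z - x1))^3) *\<^sub>R e)"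
      by (intro uc continuous_intros)
    show "uniformly_continuous_on \<Omega> (\<lambda>z. ((\<chi> i j. if i = j then -a else 0) + (2*\<alpha> - 12*\<alpha>^3*(e \<bullet> (z - x1))^2) *\<^sub>R (\<chi> i j. e$i * e$j)) :: real^'n^'n)"
      by (intro uc continuous_intros)
  next
    fix z assume "z \<in> \<Omega>"
    show "((\<lambda>z. c + m \<bullet> (z - x1) - a/2 * ((z - x1) \<bullet> (z - x1)) + \<alpha> * (e \<bullet> (z - x1))^2 - \<alpha>^3 * (e \<bullet> (z - x1))^4) has_derivative
       (\<lambda>h. (m - a *\<^sub>R (z - x1) + (2*\<alpha>*(e \<bullet> (z - x1)) - 4*\<alpha>^3*(e \<bullet> (z - x1))^3) *\<^sub>R e) \<bullet> h)) (at z)"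
      by (auto intro!: derivative_eq_intros simp: fun_eq_iff inner_add_left inner_diff_left inner_diff_right inner_commute algebra_simps power2_eq_square power3_eq_cube)
    show "((\<lambda>z. m - a *\<^sub>R (z - x1) + (2*\<alpha>*(e \<bullet> (z - x1)) - 4*\<alpha>^3*(e \<bullet> (z - x1))^3) *\<^sub>R e) has_derivative
       (\<lambda>h. ((\<chi> i j. if i = j then -a else 0) + (2*\<alpha> - 12*\<alpha>^3*(e \<bullet> (z - x1))^2) *\<^sub>R (\<chi> i j. e$i * e$j)) *v h)) (at z)"
      unfolding Hmv
      by (auto intro!: derivative_eq_intros simp: fun_eq_iff inner_add_left inner_diff_left inner_diff_right inner_commute algebra_simps power2_eq_square power3_eq_cube)
  qed
qed
lemma psi_le:
  fixes al u :: real
  assumes "al > 0"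
  shows "al * u^2 - al ^ 3*u^4 \<le> \<bar>u\<bar>"
proof (cases "al * \<bar>u\<bar> \<le> 1")
  case True
  have "al * u^2 = \<bar>u\<bar>*(al * \<bar>u\<bar>)" by (simp add: power2_eq_square mult_ac abs_mult_self_eq)
  also have "\<dots> \<le> \<bar>u\<bar>*1" by (rule mult_left_mono) (use True in auto)
  finally have 1: "al * u^2 \<le> \<bar>u\<bar>" by simp
  have "al ^ 3*u^4 \<ge> 0" using assms by simp
  then show ?thesis using 1 by linarith
next
  case False
  have 1: "1 \<le> al ^ 2*u^2" using False
    by (metis abs_mult abs_of_pos assms linear one_le_power power2_abs power_mult_distrib)
  have eq: "al ^ 3*u^4 = (al * u^2)*(al ^ 2*u^2)" by (simp add: power2_eq_square power3_eq_cube power4_eq_xxxx mult_ac)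
  have "(al * u^2)*1 \<le> (al * u^2)*(al ^ 2*u^2)" by (rule mult_left_mono[OF 1]) (use assms in simp)
  then show ?thesis using eq by simp
qed

theorem lemma3p1:
  fixes \<Omega> :: "(real^'n) set" and v :: "real^'n \<Rightarrow> real"
    and \<Lambda> K a t b :: real and y x0 x1 :: "real^'n"
  assumes "open \<Omega>" and "connected \<Omega>" and "\<Omega> \<noteq> {}" and "bounded \<Omega>"
    and "strictly_convex_set \<Omega>"
    and "\<Lambda> \<ge> 1"
    and "continuous_on (closure \<Omega>) v"
    and "visc_pucci_le \<Lambda> K \<Omega> v"
    and "a > 0"
    and "x0 \<in> \<Omega> - contact_set 0 \<Omega> v"
    and "tangent_below \<Omega> (paraboloid (-a) y b) (conv_env 0 \<Omega> v) x0"
    and "t > 0" and "x1 \<in> closure \<Omega>"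
    and "tangent_below \<Omega> (\<lambda>x. paraboloid (-a) y b x + t) v x1"
  shows "x1 \<in> closure \<Omega> - contact_set 0 \<Omega> v"
proof (rule ccontr)
  assume nc: "\<not> ?thesis"
  define P where "P = paraboloid (-a) y b"
  define c where "c = v x1"
  define q where "q = y - a *\<^sub>R x1"
  have x1\<Omega>: "x1 \<in> \<Omega>" and cx1: "conv_env 0 \<Omega> v x1 = c"
    using nc assms(13) unfolding contact_set_def c_def by auto
  have Pt1: "\<forall>z\<in>closure \<Omega>. P z + t \<le> v z" and Pt2: "P x1 + t = c"
    using assms(14) unfolding tangent_below_def P_def c_def by auto
  have Px0: "P x0 = conv_env 0 \<Omega> v x0" using assms(11) unfolding tangent_below_def P_def by auto
  have x0\<Omega>: "x0 \<in> \<Omega>" using assms(10) by auto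
  have Pexp: "P z = P x1 + q \<bullet> (z - x1) - a/2*((z - x1) \<bullet> (z - x1))" for z
    unfolding P_def paraboloid_def q_def
    by (simp add: power2_norm_eq_inner inner_diff_left inner_diff_right inner_commute algebra_simps)
  have cc: "compact (closure \<Omega>)" using assms(4) by simp
  obtain B0 where B0: "\<forall>z\<in>closure \<Omega>. \<bar>v z\<bar> \<le> B0"
    using compact_imp_bounded[OF compact_continuous_image[OF assms(7) cc]] unfolding bounded_real by auto
  have par0: "paraboloid (-0) yy bb z = yy \<bullet> z + bb" for yy bb z unfolding paraboloid_def by simp
  define S where "S z = {yy \<bullet> z + bb | yy bb. \<forall>w\<in>closure \<Omega>. yy \<bullet> w + bb \<le> v w}" for z
  have env: "conv_env 0 \<Omega> v z = Sup (S z)" for z unfolding conv_env_def S_def par0 ..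
  have bdd: "bdd_above (S z)" if "z \<in> closure \<Omega>" for z
    unfolding S_def bdd_above_def using that by auto
  have Sne: "S z \<noteq> {}" for z
  proof -
    have "\<forall>w\<in>closure \<Omega>. (0::real^'n) \<bullet> w + (-B0) \<le> v w" using B0 by (auto simp: abs_le_iff)
    then have "(0::real^'n) \<bullet> z + (-B0) \<in> S z" unfolding S_def by blast
    then show ?thesis by blast
  qed
  have aff_le: "yy \<bullet> z + bb \<le> conv_env 0 \<Omega> v z" if "\<forall>w\<in>closure \<Omega>. yy \<bullet> w + bb \<le> v w" "z \<in> closure \<Omega>" for yy bb z
    unfolding env by (rule cSup_upper) (use that bdd in \<open>auto simp: S_def\<close>)
  have approx: "\<exists>yy bb. (\<forall>w\<in>closure \<Omega>. yy \<bullet> w + bb \<le> v w) \<and> conv_env 0 \<Omega> v z - \<epsilon> < yy \<bullet> z + bb"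
    if zc: "z \<in> closure \<Omega>" and ep: "\<epsilon> > 0" for z \<epsilon>
  proof -
    have "conv_env 0 \<Omega> v z - \<epsilon> < Sup (S z)" using env ep by simp
    then obtain s where "s \<in> S z" "conv_env 0 \<Omega> v z - \<epsilon> < s"
      using less_cSup_iff[OF Sne bdd[OF zc]] by auto
    then show ?thesis unfolding S_def by auto
  qed
  obtain r where r: "r > 0" "ball x1 r \<subseteq> \<Omega>" using assms(1) x1\<Omega> open_contains_ball by blast
  have x1cl: "x1 \<in> closure \<Omega>" using assms(13) .
  have "\<forall>n. \<exists>Y. \<forall>z\<in>closure \<Omega>. c - inverse (real (Suc n)) + Y \<bullet> (z - x1) \<le> v z"
  proof
    fix n
    obtain yy bb where yb: "\<forall>w\<in>closure \<Omega>. yy \<bullet> w + bb \<le> v w" "c - inverse (real (Suc n)) < yy \<bullet> x1 + bb"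
      using approx[OF x1cl, of "inverse (real (Suc n))"] cx1 by auto
    show "\<exists>Y. \<forall>z\<in>closure \<Omega>. c - inverse (real (Suc n)) + Y \<bullet> (z - x1) \<le> v z"
    proof (intro exI ballI)
      fix z assume "z \<in> closure \<Omega>"
      then have "yy \<bullet> z + bb \<le> v z" using yb by auto
      then show "c - inverse (real (Suc n)) + yy \<bullet> (z - x1) \<le> v z" using yb(2) by (simp add: inner_diff_right)
    qed
  qed
  then obtain Y where Y: "\<forall>n. \<forall>z\<in>closure \<Omega>. c - inverse (real (Suc n)) + Y n \<bullet> (z - x1) \<le> v z" by metis
  have cB: "c \<le> B0" using B0 x1cl unfolding c_def by force
  define R where "R = 2*(B0 - c + 1)/r"
  have Ybd: "Y n \<in> cball 0 R" for n
  proof (cases "Y n = 0")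
    case True
    then show ?thesis using cB r(1) by (simp add: R_def)
  next
    case False
    define z where "z = x1 + (r/2/norm (Y n)) *\<^sub>R Y n"
    have "dist x1 z = r/2" using False r(1) by (simp add: z_def dist_norm)
    then have "z \<in> ball x1 r" using r(1) by simp
    then have zcl: "z \<in> closure \<Omega>" using r(2) closure_subset by blast
    have "Y n \<bullet> (z - x1) = r/2 * norm (Y n)" using False
      by (simp add: z_def power2_norm_eq_inner[symmetric] power2_eq_square)
    moreover have "c - inverse (real (Suc n)) + Y n \<bullet> (z - x1) \<le> v z" using Y zcl by blast
    moreover have "v z \<le> B0" using B0 zcl by force
    moreover have "inverse (real (Suc n)) \<le> 1" by (rule inverse_le_1_iff[THEN iffD2]) simp
    ultimately have "r/2 * norm (Y n) \<le> B0 - c + 1" by linarith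
    then have "norm (Y n) \<le> 2*(B0 - c + 1)/r" using r(1) by (simp add: field_simps)
    then show ?thesis by (simp add: R_def)
  qed
  obtain p \<sigma> where p: "p \<in> cball 0 R" "strict_mono \<sigma>" "(Y \<circ> \<sigma>) \<longlonglongrightarrow> p"
    using seq_compactE[OF compact_imp_seq_compact[OF compact_cball], of Y] Ybd by metis
  have ell: "c + p \<bullet> (z - x1) \<le> v z" if "z \<in> closure \<Omega>" for z
  proof -
    have l1: "(\<lambda>n. inverse (real (Suc (\<sigma> n)))) \<longlonglongrightarrow> 0"
      using LIMSEQ_subseq_LIMSEQ[OF LIMSEQ_inverse_real_of_nat p(2)] by (simp add: o_def)
    have l2: "(\<lambda>n. Y (\<sigma> n)) \<longlonglongrightarrow> p" using p(3) by (simp add: o_def)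
    have "(\<lambda>n. c - inverse (real (Suc (\<sigma> n))) + Y (\<sigma> n) \<bullet> (z - x1)) \<longlonglongrightarrow> c - 0 + p \<bullet> (z - x1)"
      by (intro tendsto_intros l1 l2)
    moreover have "\<exists>N. \<forall>n\<ge>N. c - inverse (real (Suc (\<sigma> n))) + Y (\<sigma> n) \<bullet> (z - x1) \<le> v z"
      using Y that by blast
    ultimately have "c - 0 + p \<bullet> (z - x1) \<le> v z" by (rule LIMSEQ_le_const2)
    then show ?thesis by simp
  qed
  have x0cl: "x0 \<in> closure \<Omega>" using x0\<Omega> closure_subset by auto
  have "p \<bullet> x0 + (c - p \<bullet> x1) \<le> conv_env 0 \<Omega> v x0"
  proof (rule aff_le[OF _ x0cl], intro ballI)
    fix w assume "w \<in> closure \<Omega>"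
    then have "c + p \<bullet> (w - x1) \<le> v w" by (rule ell)
    then show "p \<bullet> w + (c - p \<bullet> x1) \<le> v w" by (simp add: inner_diff_right)
  qed
  then have A: "c + p \<bullet> (x0 - x1) \<le> P x0" using Px0 by (simp add: inner_diff_right)
  have pq: "p \<noteq> q"
  proof
    assume "p = q"
    have "(x0 - x1) \<bullet> (x0 - x1) \<ge> 0" by simp
    then have "a/2 * ((x0 - x1) \<bullet> (x0 - x1)) \<ge> 0" using assms(9) by simp
    moreover have "c + q \<bullet> (x0 - x1) \<le> P x0" using A \<open>p = q\<close> by simp
    ultimately show False using Pexp[of x0] Pt2 assms(12) by linarith
  qed
  define e where "e = (1/2) *\<^sub>R (p - q)"
  define m where "m = (1/2) *\<^sub>R (p + q)"
  have e0: "e \<noteq> 0" using pq by (simp add: e_def)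
  have ee: "e \<bullet> e > 0" using e0 by simp
  define \<beta> where "\<beta> = \<bar>K\<bar> + a*(1 + real CARD('n) * \<Lambda>) + 1"
  have "a * (real CARD('n) * \<Lambda>) \<ge> 0" using assms(6,9) by simp
  then have \<beta>0: "\<beta> > a" unfolding \<beta>_def by (simp add: algebra_simps)
  define \<alpha> where "\<alpha> = \<beta> / (2*(e \<bullet> e))"
  have \<alpha>0: "\<alpha> > 0" using \<beta>0 ee assms(9) by (simp add: \<alpha>_def)
  have two: "2*\<alpha>*(e \<bullet> e) = \<beta>" using ee by (simp add: \<alpha>_def)
  define \<phi> where "\<phi> = (\<lambda>z. c + m \<bullet> (z - x1) - a/2 * ((z - x1) \<bullet> (z - x1)) + \<alpha> * (e \<bullet> (z - x1))^2 - \<alpha>^3 * (e \<bullet> (z - x1))^4)"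
  define g where "g = (\<lambda>z. m - a *\<^sub>R (z - x1) + (2*\<alpha>*(e \<bullet> (z - x1)) - 4*\<alpha>^3*(e \<bullet> (z - x1))^3) *\<^sub>R e)"
  define H where "H = (\<lambda>z. ((\<chi> i j. if i = j then -a else 0) + (2*\<alpha> - 12*\<alpha>^3*(e \<bullet> (z - x1))^2) *\<^sub>R (\<chi> i j. e$i * e$j)) :: real^'n^'n)"
  have C2: "C2_closure_with \<Omega> \<phi> g H" unfolding \<phi>_def g_def H_def by (rule test_fn[OF assms(4)])
  have tb: "tangent_below \<Omega> \<phi> v x1"
    unfolding tangent_below_def
  proof
    show "\<phi> x1 = v x1" by (simp add: \<phi>_def c_def)
    show "\<forall>z\<in>closure \<Omega>. \<phi> z \<le> v z"
    proof
      fix z assume z: "z \<in> closure \<Omega>"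
      define h where "h = z - x1"
      define s where "s = e \<bullet> h"
      have ps: "\<alpha>* s^2 - \<alpha>^3* s^4 \<le> \<bar>s\<bar>" by (rule psi_le[OF \<alpha>0])
      have l1: "c + p \<bullet> h \<le> v z" using ell z h_def by blast
      have l2: "c + q \<bullet> h - a/2*(h \<bullet> h) \<le> v z" using Pt1 Pexp[of z] Pt2 z h_def by force
      have mp: "m \<bullet> h + s = p \<bullet> h" and mq: "m \<bullet> h - s = q \<bullet> h"
        by (simp_all add: m_def e_def s_def inner_add_left inner_diff_left algebra_simps)
      have hh: "a/2*(h \<bullet> h) \<ge> 0" using assms(9) by simp
      have "\<phi> z = c + m \<bullet> h - a/2*(h \<bullet> h) + (\<alpha>* s^2 - \<alpha>^3* s^4)" by (simp add: \<phi>_def h_def s_def)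
      then have ph: "\<phi> z \<le> c + m \<bullet> h - a/2*(h \<bullet> h) + \<bar>s\<bar>" using ps by linarith
      show "\<phi> z \<le> v z"
      proof (cases "s \<ge> 0")
        case True
        then have "\<bar>s\<bar> = s" by simp
        then show ?thesis using ph l1 mp hh by linarith
      next
        case False
        then have "\<bar>s\<bar> = - s" by simp
        then show ?thesis using ph l2 mq by linarith
      qed
    qed
  qed
  have K1: "pucci_minus \<Lambda> (H x1) \<le> K" using assms(8) C2 tb x1\<Omega> unfolding visc_pucci_le_def by blast
  have Hx1: "H x1 = (\<chi> i j. (if i = j then -a else 0) + (2*\<alpha>) * (e$i * e$j))"
    by (simp add: H_def vec_eq_iff)
  have "pucci_minus \<Lambda> (H x1) = real (CARD('n)-1) * (\<Lambda> * (-a)) + (2*\<alpha> * (e \<bullet> e) - a)"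
    unfolding Hx1 by (rule pucci_rank1[OF e0 assms(9)]) (use two \<beta>0 in simp)
  then have K2: "pucci_minus \<Lambda> (H x1) = \<beta> - a - real (CARD('n)-1) * (\<Lambda> * a)" using two by simp
  have "real (CARD('n)-1) * (\<Lambda> * a) \<le> real CARD('n) * (\<Lambda> * a)"
    by (rule mult_right_mono) (use assms(6,9) in auto)
  then have "pucci_minus \<Lambda> (H x1) > K" unfolding K2 \<beta>_def by (simp add: algebra_simps)
  then show False using K1 by simp
qed

end
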